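(* For the system $$u_{0,0}-v_{1,1}=0,\qquad (u_{1,0}-u_{0,0})(v_{1,0}-u_{0,0})-(u_{0,1}-u_{0,0})(v_{0,1}-u_{0,0})=0,$$ the pair $$\rho_2=\frac{v_{1,0}-v_{0,0}+u_{-1,0}-u_{-2,0}}{(v_{0,0}-u_{-2,0})(v_{1,0}-u_{-1,0})},\qquad \sigma_2=\frac{1}{v_{-1,0}-u_{-3,0}}\left(\frac{u_{-2,0}-u_{-3,0}}{u_{-1,0}-u_{-2,0}}+\frac{v_{-1,0}-2u_{-2,0}+u_{-3,0}}{v_{0,0}-u_{-2,0}}\right)$$ is a conservation law, i.e. $(\mathcal T-1)\rho_2=(\mathcal S-1)\sigma_2$ on solutions.
   Context: Unknowns $u,v$ on $\mathbb Z^2$, $u_{i,j}=u(n+i,m+j)$, similarly $v$. Shifts $\mathcal S:n\mapsto n+1$, $\mathcal T:m\mapsto m+1$, acting by $\mathcal S^k\mathcal T^\ell(f_{i,j})=f_{i+k,j+\ell}$. A conservation law is a pair $(\rho,\sigma)$ of functions of finitely many shifts of $(u,v)$ such that $(\mathcal T-1)\rho=(\mathcal S-1)\sigma$ holds for all solutions of the system (on which all denominators are nonzero). *)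

theory Defs
  imports Complex_Main
begin

text \<open>Fields u, v on Z^2; u n m stands for u(n,m). The shifted value u_{i,j} at base point
(n,m) is u (n+i) (m+j).\<close>

definition rho2 :: "(int \<Rightarrow> int \<Rightarrow> real) \<Rightarrow> (int \<Rightarrow> int \<Rightarrow> real) \<Rightarrow> int \<Rightarrow> int \<Rightarrow> real" where
  "rho2 u v n m =
     (v (n+1) m - v n m + u (n-1) m - u (n-2) m) /
     ((v n m - u (n-2) m) * (v (n+1) m - u (n-1) m))"

definition sigma2 :: "(int \<Rightarrow> int \<Rightarrow> real) \<Rightarrow> (int \<Rightarrow> int \<Rightarrow> real) \<Rightarrow> int \<Rightarrow> int \<Rightarrow> real" where
  "sigma2 u v n m =
     (1 / (v (n-1) m - u (n-3) m)) *
     ((u (n-2) m - u (n-3) m) / (u (n-1) m - u (n-2) m)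
      + (v (n-1) m - 2 * u (n-2) m + u (n-3) m) / (v n m - u (n-2) m))"

definition is_solution :: "(int \<Rightarrow> int \<Rightarrow> real) \<Rightarrow> (int \<Rightarrow> int \<Rightarrow> real) \<Rightarrow> bool" where
  "is_solution u v \<longleftrightarrow> (\<forall>n m.
     u n m - v (n+1) (m+1) = 0 \<and>
     (u (n+1) m - u n m) * (v (n+1) m - u n m) - (u n (m+1) - u n m) * (v n (m+1) - u n m) = 0)"

definition denoms_nonzero :: "(int \<Rightarrow> int \<Rightarrow> real) \<Rightarrow> (int \<Rightarrow> int \<Rightarrow> real) \<Rightarrow> bool" where
  "denoms_nonzero u v \<longleftrightarrow> (\<forall>n m.
     v n m - u (n-2) m \<noteq> 0 \<and> v (n+1) m - u (n-1) m \<noteq> 0 \<and>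
     v (n-1) m - u (n-3) m \<noteq> 0 \<and> u (n-1) m - u (n-2) m \<noteq> 0)"

end

theory Submission
  imports Defs
begin

lemma key0:
  fixes B C D P Q W :: real
  assumes "B \<noteq> 0" "C \<noteq> 0" "D \<noteq> 0" "P \<noteq> 0" "Q \<noteq> 0" "W \<noteq> 0"
  shows "((C+D) - D*(P-C)/C + C*(W-B)/B) / ((C*W/B)*(D*P/C)) - (2*C+Q-P)/(P*Q)
     = 1/P*(C/D+(P-2*C)/Q) - 1/W*(B/C+(W-2*B)/P)"
  using assms by (simp add: field_simps)

lemma key:
  fixes a b c d w p q x y :: real
  assumes hx: "(d - c) * (p - c) = (x - c) * (b - c)"
      and hy: "(c - b) * (w - b) = (y - b) * (a - b)"
      and n1: "c - b \<noteq> 0" and n2: "b - a \<noteq> 0" and n3: "d - c \<noteq> 0"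
      and n4: "p - b \<noteq> 0" and n5: "q - c \<noteq> 0" and n6: "w - a \<noteq> 0"
  shows "(d - c + x - y) / ((c - y) * (d - x)) - (q - p + c - b) / ((p - b) * (q - c))
   = (1 / (p - b)) * ((c - b) / (d - c) + (p - 2*c + b) / (q - c))
     - (1 / (w - a)) * ((b - a) / (c - b) + (w - 2*b + a) / (p - b))"
proof -
  define B where "B = b - a"
  define C where "C = c - b"
  define D where "D = d - c"
  define P where "P = p - b"
  define Q where "Q = q - c"
  define W where "W = w - a"
  have x: "x = c - D*(P-C)/C"
  proof -
    have "(x - c) * (b - c) = D * (P - C)" using hx unfolding B_def C_def D_def P_def by (simp add: algebra_simps)
    then show ?thesis using n1 unfolding C_def by (simp add: field_simps)
  qed
  have y: "y = b - C*(W-B)/B"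
  proof -
    have "(y - b) * (a - b) = C * (W - B)" using hy unfolding B_def C_def W_def by (simp add: algebra_simps)
    then show ?thesis using n2 unfolding B_def by (simp add: field_simps)
  qed
  have e1: "d - c + x - y = (C+D) - D*(P-C)/C + C*(W-B)/B"
    unfolding x y B_def C_def D_def by simp
  have e2: "c - y = C*W/B"
    unfolding y using n2 unfolding B_def C_def W_def by (simp add: field_simps)
  have e3: "d - x = D*P/C"
    unfolding x using n1 unfolding C_def D_def P_def by (simp add: field_simps)
  have e4: "q - p + c - b = 2*C+Q-P" "p - 2*c + b = P - 2*C" "w - 2*b + a = W - 2*B"
    unfolding B_def C_def P_def Q_def W_def by simp_all
  show ?thesis unfolding e1 e2 e3 e4
    using key0[of B C D P Q W] n1 n2 n3 n4 n5 n6 unfolding B_def C_def D_def P_def Q_def W_def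
    by simp
qed

theorem mainTheorem13:
  fixes u v :: "int \<Rightarrow> int \<Rightarrow> real"
  assumes "is_solution u v"
    and "denoms_nonzero u v"
  shows "\<forall>n m. rho2 u v n (m+1) - rho2 u v n m = sigma2 u v (n+1) m - sigma2 u v n m"
proof (intro allI)
  fix n m :: int
  have S0: "\<forall>n m. u n m - v (n + 1) (m + 1) = 0 \<and>
         (u (n + 1) m - u n m) * (v (n + 1) m - u n m) -
         (u n (m + 1) - u n m) * (v n (m + 1) - u n m) = 0"
    using assms(1) unfolding is_solution_def by blast
  have S: "\<And>n m. u n m = v (n+1) (m+1)"
    "\<And>n m. (u (n+1) m - u n m) * (v (n+1) m - u n m) - (u n (m+1) - u n m) * (v n (m+1) - u n m) = 0"
    using S0 by (metis eq_iff_diff_eq_0)+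
  have N: "\<And>n m. v n m - u (n-2) m \<noteq> 0" "\<And>n m. v (n-1) m - u (n-3) m \<noteq> 0"
    "\<And>n m. u (n-1) m - u (n-2) m \<noteq> 0"
    using assms(2) unfolding denoms_nonzero_def by auto
  have vd: "v (n+1) (m+1) = u n m" "v n (m+1) = u (n-1) m" "v (n-1) (m+1) = u (n-2) m"
    using S(1)[of n m] S(1)[of "n-1" m] S(1)[of "n-2" m] by simp_all
  have hx: "(u n m - u (n-1) m) * (v n m - u (n-1) m) = (u (n-1) (m+1) - u (n-1) m) * (u (n-2) m - u (n-1) m)"
    using S(2)[of "n-1" m] vd by simp
  have hy: "(u (n-1) m - u (n-2) m) * (v (n-1) m - u (n-2) m) = (u (n-2) (m+1) - u (n-2) m) * (u (n-3) m - u (n-2) m)"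
    using S(2)[of "n-2" m] S(1)[of "n-3" m] by (simp add: algebra_simps)
  have n1: "u (n-1) m - u (n-2) m \<noteq> 0" using N(3)[of n m] .
  have n2: "u (n-2) m - u (n-3) m \<noteq> 0" using N(3)[of "n-1" m] by (simp add: algebra_simps)
  have n3: "u n m - u (n-1) m \<noteq> 0" using N(3)[of "n+1" m] by simp
  have n4: "v n m - u (n-2) m \<noteq> 0" using N(1)[of n m] .
  have n5: "v (n+1) m - u (n-1) m \<noteq> 0" using N(1)[of "n+1" m] by simp
  have n6: "v (n-1) m - u (n-3) m \<noteq> 0" using N(2)[of n m] .
  have R: "rho2 u v n (m+1) = (u n m - u (n-1) m + u (n-1) (m+1) - u (n-2) (m+1)) /
     ((u (n-1) m - u (n-2) (m+1)) * (u n m - u (n-1) (m+1)))"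
    unfolding rho2_def vd by simp
  have Sg: "sigma2 u v (n+1) m = (1 / (v n m - u (n-2) m)) *
     ((u (n-1) m - u (n-2) m) / (u n m - u (n-1) m)
      + (v n m - 2 * u (n-1) m + u (n-2) m) / (v (n+1) m - u (n-1) m))"
    unfolding sigma2_def by (simp add: algebra_simps)
  show "rho2 u v n (m+1) - rho2 u v n m = sigma2 u v (n+1) m - sigma2 u v n m"
    unfolding R Sg
    using key[OF hx hy n1 n2 n3 n4 n5 n6] unfolding rho2_def sigma2_def
    by (simp add: algebra_simps)
qed

end
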